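(* Let $(\mathcal{B}_n)_{n\in\mathbb{N}}$ be a countable inverse system of complete topological rings with continuous surjective transition homomorphisms $p_{m,n}\colon\mathcal{B}_m\to\mathcal{B}_n$ for $m\ge n\ge0$, let $\mathcal{B}=\varprojlim_n\mathcal{B}_n$ with the inverse limit topology and let $p_n\colon\mathcal{B}\to\mathcal{B}_n$ be the canonical projections. Let $\mathrm{e}_n\colon\mathcal{B}_n\to\mathcal{B}_n\{T\}$, $n\in\mathbb{N}$, be restricted exponential homomorphisms such that $\mathrm{e}_n\circ p_{m,n}=(p_{m,n}\widehat{\otimes}\mathrm{id}_{\mathbb{Z}[T]})\circ\mathrm{e}_m$ for all $m\ge n\ge0$. Then there exists a unique restricted exponential homomorphism $\underline{\mathrm{e}}=\varprojlim_n\mathrm{e}_n\colon\mathcal{B}\to\mathcal{B}\{T\}$ such that $\mathrm{e}_n\circ p_n=(p_n\widehat{\otimes}\mathrm{id}_{\mathbb{Z}[T]})\circ\underline{\mathrm{e}}$ for every $n\in\mathbb{N}$.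
   Context: Conventions: topological rings are linearly topologized with a countable fundamental system of open ideals; homomorphisms are continuous; complete means the canonical map to $\varprojlim_{\mathfrak{a}}\mathcal{B}/\mathfrak{a}$ (open ideals, discrete quotients) is a topological isomorphism. For complete $\mathcal{C}$, $\mathcal{C}\{T\}$, $\mathcal{C}\{T,T'\}$ denote restricted power series (coefficients converging to $0$), topologized by the ideals of series with all coefficients in a given open ideal. For a continuous ring homomorphism $p\colon\mathcal{C}\to\mathcal{C}'$, $p\widehat{\otimes}\mathrm{id}_{\mathbb{Z}[T]}\colon\mathcal{C}\{T\}\to\mathcal{C}'\{T\}$ is $\sum c_iT^i\mapsto\sum p(c_i)T^i$. A restricted exponential homomorphism of a complete ring $\mathcal{C}$ is a continuous ring homomorphism $\mathrm{e}\colon\mathcal{C}\to\mathcal{C}\{T\}$, $\mathrm{e}(c)=\sum_i\mathrm{e}_i(c)T^i$, with $\mathrm{e}_0=\mathrm{id}$ and $\sum_{i,j}\mathrm{e}_j(\mathrm{e}_i(c))T'^jT^i=\sum_\ell\mathrm{e}_\ell(c)(T+T')^\ell$ for all $c$. *)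

theory Defs
  imports "HOL-Algebra.Ideal"
begin

text \<open>A linearly topologized ring with a countable fundamental system of open ideals,
  given (w.l.o.g.) as a decreasing sequence of ideals I 0, I 1, ...\<close>
definition lin_top :: "('a, 'm) ring_scheme \<Rightarrow> (nat \<Rightarrow> 'a set) \<Rightarrow> bool" where
  "lin_top R I \<longleftrightarrow> (\<forall>k. ideal (I k) R) \<and> (\<forall>k. I (Suc k) \<subseteq> I k)"

text \<open>Completeness: the canonical map R to the inverse limit of the R / I k is bijective.
  An element of that inverse limit is represented by a sequence x with x (k+1) - x k in I k;
  its preimage is an element y with y - x k in I k for all k.\<close>
definition complete_lt :: "('a, 'm) ring_scheme \<Rightarrow> (nat \<Rightarrow> 'a set) \<Rightarrow> bool" where
  "complete_lt R I \<longleftrightarrow> lin_top R I \<and>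
     (\<forall>x. (\<forall>k. x k \<in> carrier R) \<and> (\<forall>k. x (Suc k) \<ominus>\<^bsub>R\<^esub> x k \<in> I k) \<longrightarrow>
          (\<exists>!y. y \<in> carrier R \<and> (\<forall>k. y \<ominus>\<^bsub>R\<^esub> x k \<in> I k)))"

definition cont_hom :: "('a, 'm) ring_scheme \<Rightarrow> (nat \<Rightarrow> 'a set) \<Rightarrow>
    ('b, 'n) ring_scheme \<Rightarrow> (nat \<Rightarrow> 'b set) \<Rightarrow> ('a \<Rightarrow> 'b) \<Rightarrow> bool" where
  "cont_hom R I S J f \<longleftrightarrow> f \<in> ring_hom R S \<and> (\<forall>k. \<exists>l. f ` I l \<subseteq> J k)"

text \<open>The ring C{T} of restricted power series (coefficient sequences tending to 0).\<close>
definition rps :: "('a, 'm) ring_scheme \<Rightarrow> (nat \<Rightarrow> 'a set) \<Rightarrow> (nat \<Rightarrow> 'a) ring" where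
  "rps R I = \<lparr> carrier = {f. (\<forall>i. f i \<in> carrier R) \<and> (\<forall>k. \<exists>N. \<forall>i\<ge>N. f i \<in> I k)},
              mult = (\<lambda>f g i. \<Oplus>\<^bsub>R\<^esub> j\<in>{..i}. f j \<otimes>\<^bsub>R\<^esub> g (i - j)),
              one = (\<lambda>i. if i = 0 then \<one>\<^bsub>R\<^esub> else \<zero>\<^bsub>R\<^esub>),
              zero = (\<lambda>i. \<zero>\<^bsub>R\<^esub>),
              add = (\<lambda>f g i. f i \<oplus>\<^bsub>R\<^esub> g i) \<rparr>"

definition rps_ideals :: "('a, 'm) ring_scheme \<Rightarrow> (nat \<Rightarrow> 'a set) \<Rightarrow> nat \<Rightarrow> (nat \<Rightarrow> 'a) set" where
  "rps_ideals R I k = {f \<in> carrier (rps R I). \<forall>i. f i \<in> I k}"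

text \<open>Restricted exponential homomorphism e : C \<rightarrow> C{T}, e c = \<Sum> e c i T^i.
  The identity \<Sum>_{i,j} e_j(e_i c) T'^j T^i = \<Sum>_l e_l(c) (T+T')^l in C{T,T'} is stated by
  comparing the coefficients of T^i T'^j: e_j(e_i c) = binom(i+j,i) e_{i+j}(c).\<close>
definition restricted_exp :: "('a, 'm) ring_scheme \<Rightarrow> (nat \<Rightarrow> 'a set) \<Rightarrow> ('a \<Rightarrow> nat \<Rightarrow> 'a) \<Rightarrow> bool" where
  "restricted_exp R I e \<longleftrightarrow> cont_hom R I (rps R I) (rps_ideals R I) e \<and>
     (\<forall>c\<in>carrier R. e c 0 = c) \<and>
     (\<forall>c\<in>carrier R. \<forall>i j. e (e c i) j = [((i + j) choose i)] \<cdot>\<^bsub>R\<^esub> e c (i + j))"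

definition inv_lim_ring :: "(nat \<Rightarrow> ('a, 'm) ring_scheme) \<Rightarrow> (nat \<Rightarrow> nat \<Rightarrow> 'a \<Rightarrow> 'a) \<Rightarrow> (nat \<Rightarrow> 'a) ring" where
  "inv_lim_ring B p = \<lparr> carrier = {x. (\<forall>n. x n \<in> carrier (B n)) \<and> (\<forall>m n. n \<le> m \<longrightarrow> p m n (x m) = x n)},
              mult = (\<lambda>x y n. x n \<otimes>\<^bsub>B n\<^esub> y n),
              one = (\<lambda>n. \<one>\<^bsub>B n\<^esub>),
              zero = (\<lambda>n. \<zero>\<^bsub>B n\<^esub>),
              add = (\<lambda>x y n. x n \<oplus>\<^bsub>B n\<^esub> y n) \<rparr>"

text \<open>Inverse limit topology: fundamental system of open ideals
  (intersection of the preimages of I n k, n \<le> k).\<close>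
definition inv_lim_ideals :: "(nat \<Rightarrow> ('a, 'm) ring_scheme) \<Rightarrow> (nat \<Rightarrow> nat \<Rightarrow> 'a set) \<Rightarrow>
    (nat \<Rightarrow> nat \<Rightarrow> 'a \<Rightarrow> 'a) \<Rightarrow> nat \<Rightarrow> (nat \<Rightarrow> 'a) set" where
  "inv_lim_ideals B I p k = {x \<in> carrier (inv_lim_ring B p). \<forall>n\<le>k. x n \<in> I n k}"

end

theory Submission
  imports Defs
begin


lemma add_pow_Suc_nat: "[Suc c] \<cdot>\<^bsub>R\<^esub> a = [c] \<cdot>\<^bsub>R\<^esub> a \<oplus>\<^bsub>R\<^esub> a"
  by (simp add: add_pow_def)

lemma add_pow_0_nat: "[(0::nat)] \<cdot>\<^bsub>R\<^esub> a = \<zero>\<^bsub>R\<^esub>"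
  by (simp add: add_pow_def)

theorem proposition2p9:
  fixes B :: "nat \<Rightarrow> ('a, 'm) ring_scheme"
    and I :: "nat \<Rightarrow> nat \<Rightarrow> 'a set"
    and p :: "nat \<Rightarrow> nat \<Rightarrow> 'a \<Rightarrow> 'a"
    and e :: "nat \<Rightarrow> 'a \<Rightarrow> nat \<Rightarrow> 'a"
  assumes rings: "\<And>n. cring (B n)"
    and complete: "\<And>n. complete_lt (B n) (I n)"
    and trans_hom: "\<And>m n. n \<le> m \<Longrightarrow> cont_hom (B m) (I m) (B n) (I n) (p m n)"
    and trans_surj: "\<And>m n. n \<le> m \<Longrightarrow> p m n ` carrier (B m) = carrier (B n)"
    and trans_id: "\<And>n x. x \<in> carrier (B n) \<Longrightarrow> p n n x = x"
    and trans_comp: "\<And>l m n x. n \<le> m \<Longrightarrow> m \<le> l \<Longrightarrow> x \<in> carrier (B l) \<Longrightarrow>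
                       p m n (p l m x) = p l n x"
    and exps: "\<And>n. restricted_exp (B n) (I n) (e n)"
    and compat: "\<And>m n x. n \<le> m \<Longrightarrow> x \<in> carrier (B m) \<Longrightarrow>
                   e n (p m n x) = (\<lambda>i. p m n (e m x i))"
  shows "\<exists>E. restricted_exp (inv_lim_ring B p) (inv_lim_ideals B I p) E \<and>
             (\<forall>n. \<forall>x\<in>carrier (inv_lim_ring B p). e n (x n) = (\<lambda>i. E x i n)) \<and>
             (\<forall>E'. restricted_exp (inv_lim_ring B p) (inv_lim_ideals B I p) E' \<and>
                   (\<forall>n. \<forall>x\<in>carrier (inv_lim_ring B p). e n (x n) = (\<lambda>i. E' x i n)) \<longrightarrow>
                   (\<forall>x\<in>carrier (inv_lim_ring B p). E' x = E x))"
  proof -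
  let ?L = "inv_lim_ring B p"
  let ?LI = "inv_lim_ideals B I p"
  have ringB: "ring (B n)" for n using rings cring.axioms(1) by blast
  have amB: "abelian_monoid (B n)" for n
    using ringB[of n] ring.is_abelian_group abelian_group.axioms(1) by blast
  have hp: "p m n \<in> ring_hom (B m) (B n)" if "n \<le> m" for m n
    using trans_hom[OF that] unfolding cont_hom_def by blast
  have carL: "x \<in> carrier ?L \<longleftrightarrow> (\<forall>n. x n \<in> carrier (B n)) \<and> (\<forall>m n. n \<le> m \<longrightarrow> p m n (x m) = x n)" for x
    by (simp add: inv_lim_ring_def)
  have [simp]: "x \<oplus>\<^bsub>?L\<^esub> y = (\<lambda>n. x n \<oplus>\<^bsub>B n\<^esub> y n)" for x y by (simp add: inv_lim_ring_def)
  have [simp]: "x \<otimes>\<^bsub>?L\<^esub> y = (\<lambda>n. x n \<otimes>\<^bsub>B n\<^esub> y n)" for x y by (simp add: inv_lim_ring_def)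
  have [simp]: "\<zero>\<^bsub>?L\<^esub> = (\<lambda>n. \<zero>\<^bsub>B n\<^esub>)" by (simp add: inv_lim_ring_def)
  have [simp]: "\<one>\<^bsub>?L\<^esub> = (\<lambda>n. \<one>\<^bsub>B n\<^esub>)" by (simp add: inv_lim_ring_def)
  have amL: "abelian_monoid ?L"
  proof (rule abelian_monoidI)
    fix x y assume "x \<in> carrier ?L" "y \<in> carrier ?L"
    then show "x \<oplus>\<^bsub>?L\<^esub> y \<in> carrier ?L"
      unfolding carL using ring_hom_add[OF hp] by (simp add: ring.ring_simprules(1)[OF ringB])
  next
    show "\<zero>\<^bsub>?L\<^esub> \<in> carrier ?L" unfolding carL
      using ring_hom_zero[OF hp ringB ringB] by (simp add: ring.ring_simprules(2)[OF ringB])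
  next
    fix x y z assume "x \<in> carrier ?L" "y \<in> carrier ?L" "z \<in> carrier ?L"
    then show "(x \<oplus>\<^bsub>?L\<^esub> y) \<oplus>\<^bsub>?L\<^esub> z = x \<oplus>\<^bsub>?L\<^esub> (y \<oplus>\<^bsub>?L\<^esub> z)"
      unfolding carL by (simp add: ring.ring_simprules(7)[OF ringB])
  next
    fix x assume "x \<in> carrier ?L"
    then show "\<zero>\<^bsub>?L\<^esub> \<oplus>\<^bsub>?L\<^esub> x = x"
      unfolding carL by (simp add: ring.ring_simprules(8)[OF ringB])
  next
    fix x y assume "x \<in> carrier ?L" "y \<in> carrier ?L"
    then show "x \<oplus>\<^bsub>?L\<^esub> y = y \<oplus>\<^bsub>?L\<^esub> x"
      unfolding carL by (simp add: ring.ring_simprules(10)[OF ringB])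
  qed
  have finsumL: "finsum ?L f A n = finsum (B n) (\<lambda>j. f j n) A"
    if "finite A" "f \<in> A \<rightarrow> carrier ?L" for f A n
    using that
  proof (induction A rule: finite_induct)
    case empty
    then show ?case by (simp add: abelian_monoid.finsum_empty[OF amL]
        abelian_monoid.finsum_empty[OF amB])
  next
    case (insert a F)
    have fB: "(\<lambda>j. f j n) \<in> F \<rightarrow> carrier (B n)" "f a n \<in> carrier (B n)"
      using insert.prems by (auto simp: carL Pi_iff)
    have "finsum ?L f (insert a F) = f a \<oplus>\<^bsub>?L\<^esub> finsum ?L f F"
      using abelian_monoid.finsum_insert[OF amL insert.hyps] insert.prems by auto
    moreover have "finsum (B n) (\<lambda>j. f j n) (insert a F) = f a n \<oplus>\<^bsub>B n\<^esub> finsum (B n) (\<lambda>j. f j n) F"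
      using abelian_monoid.finsum_insert[OF amB insert.hyps] fB by auto
    ultimately show ?case using insert.IH insert.prems by simp
  qed
  have addpowL: "([c] \<cdot>\<^bsub>?L\<^esub> y) n = [c] \<cdot>\<^bsub>B n\<^esub> (y n)" for c :: nat and y n
    by (induction c) (simp_all add: add_pow_Suc_nat add_pow_0_nat)
  have eh: "e n \<in> ring_hom (B n) (rps (B n) (I n))" for n
    using exps[of n] unfolding restricted_exp_def cont_hom_def by blast
  have econt: "\<forall>k. \<exists>l. e n ` I n l \<subseteq> rps_ideals (B n) (I n) k" for n
    using exps[of n] unfolding restricted_exp_def cont_hom_def by blast
  have e0: "e n c 0 = c" if "c \<in> carrier (B n)" for n c
    using exps[of n] that unfolding restricted_exp_def by blast
  have eexp: "e n (e n c i) j = [((i + j) choose i)] \<cdot>\<^bsub>B n\<^esub> e n c (i + j)" if "c \<in> carrier (B n)" for n c i j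
    using exps[of n] that unfolding restricted_exp_def by blast
  have ecar: "e n c \<in> carrier (rps (B n) (I n))" if "c \<in> carrier (B n)" for n c
    using ring_hom_closed[OF eh that] .
  have ecarB: "e n c i \<in> carrier (B n)" if "c \<in> carrier (B n)" for n c i
    using ecar[OF that] by (simp add: rps_def)
  have lt: "lin_top (B n) (I n)" for n using complete[of n] unfolding complete_lt_def by blast
  have Idec: "I n l \<subseteq> I n k" if "k \<le> l" for n k l
    using that
  proof (induction l)
    case 0 then show ?case by simp
  next
    case (Suc l)
    then show ?case using lt[of n] unfolding lin_top_def
      by (metis le_Suc_eq order_refl subset_trans)
  qed
  define E where "E = (\<lambda>x i n. e n (x n) i)"
  have EL: "E x i \<in> carrier ?L" if "x \<in> carrier ?L" for x i
  proof -
    have "\<forall>m n. n \<le> m \<longrightarrow> p m n (E x i m) = E x i n"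
    proof (intro allI impI)
      fix m n :: nat assume nm: "n \<le> m"
      have "x m \<in> carrier (B m)" "p m n (x m) = x n" using that nm unfolding carL by auto
      then show "p m n (E x i m) = E x i n" unfolding E_def using compat[OF nm] by metis
    qed
    moreover have "E x i n \<in> carrier (B n)" for n
      using that unfolding carL E_def by (simp add: ecarB)
    ultimately show ?thesis unfolding carL by blast
  qed
  have Erps: "E x \<in> carrier (rps ?L ?LI)" if xL: "x \<in> carrier ?L" for x
  proof -
    have "\<exists>N. \<forall>i\<ge>N. E x i \<in> ?LI k" for k
    proof -
      have "\<exists>N. \<forall>i\<ge>N. e n (x n) i \<in> I n k" for n
        using ecar[of "x n" n] xL unfolding carL by (simp add: rps_def)
      then obtain N where N: "\<And>n i. i \<ge> N n \<Longrightarrow> e n (x n) i \<in> I n k" by metis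
      define M where "M = Max (N ` {..k})"
      have "E x i \<in> ?LI k" if "i \<ge> M" for i
      proof -
        have "\<forall>n\<le>k. E x i n \<in> I n k"
        proof (intro allI impI)
          fix n assume "n \<le> k"
          then have "N n \<le> M" unfolding M_def by auto
          then show "E x i n \<in> I n k" unfolding E_def using N \<open>i \<ge> M\<close> by auto
        qed
        then show ?thesis unfolding inv_lim_ideals_def using EL[OF xL] by blast
      qed
      then show ?thesis by blast
    qed
    then show ?thesis using EL[OF xL] by (simp add: rps_def)
  qed
  have Ehom: "E \<in> ring_hom ?L (rps ?L ?LI)"
  proof (rule ring_hom_memI)
    fix x assume "x \<in> carrier ?L" then show "E x \<in> carrier (rps ?L ?LI)" by (rule Erps)
  next
    fix x y assume xL: "x \<in> carrier ?L" and yL: "y \<in> carrier ?L"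
    have xB: "x n \<in> carrier (B n)" and yB: "y n \<in> carrier (B n)" for n using xL yL unfolding carL by auto
    show "E (x \<otimes>\<^bsub>?L\<^esub> y) = E x \<otimes>\<^bsub>rps ?L ?LI\<^esub> E y"
    proof (rule ext, rule ext)
      fix i n
      have "E (x \<otimes>\<^bsub>?L\<^esub> y) i n = (e n (x n) \<otimes>\<^bsub>rps (B n) (I n)\<^esub> e n (y n)) i"
        unfolding E_def using ring_hom_mult[OF eh xB yB] by simp
      also have "\<dots> = (\<Oplus>\<^bsub>B n\<^esub> j\<in>{..i}. e n (x n) j \<otimes>\<^bsub>B n\<^esub> e n (y n) (i - j))"
        by (simp add: rps_def)
      also have "\<dots> = (\<Oplus>\<^bsub>?L\<^esub> j\<in>{..i}. E x j \<otimes>\<^bsub>?L\<^esub> E y (i - j)) n"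
      proof -
        have "(\<lambda>j. E x j \<otimes>\<^bsub>?L\<^esub> E y (i - j)) \<in> {..i} \<rightarrow> carrier ?L"
        proof
          fix j
          have "E x j \<otimes>\<^bsub>?L\<^esub> E y (i - j) \<in> carrier ?L"
            using EL[OF xL, of j] EL[OF yL, of "i - j"] unfolding carL
            using ring_hom_mult[OF hp] by (simp add: ring.ring_simprules(5)[OF ringB])
          then show "E x j \<otimes>\<^bsub>?L\<^esub> E y (i - j) \<in> carrier ?L" .
        qed
        then show ?thesis by (subst finsumL) (simp_all add: E_def)
      qed
      also have "\<dots> = (E x \<otimes>\<^bsub>rps ?L ?LI\<^esub> E y) i n" by (simp add: rps_def)
      finally show "E (x \<otimes>\<^bsub>?L\<^esub> y) i n = (E x \<otimes>\<^bsub>rps ?L ?LI\<^esub> E y) i n" .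
    qed
    show "E (x \<oplus>\<^bsub>?L\<^esub> y) = E x \<oplus>\<^bsub>rps ?L ?LI\<^esub> E y"
    proof (rule ext, rule ext)
      fix i n
      show "E (x \<oplus>\<^bsub>?L\<^esub> y) i n = (E x \<oplus>\<^bsub>rps ?L ?LI\<^esub> E y) i n"
        unfolding E_def using ring_hom_add[OF eh xB yB] by (simp add: rps_def)
    qed
  next
    show "E \<one>\<^bsub>?L\<^esub> = \<one>\<^bsub>rps ?L ?LI\<^esub>"
    proof (rule ext, rule ext)
      fix i n
      show "E \<one>\<^bsub>?L\<^esub> i n = \<one>\<^bsub>rps ?L ?LI\<^esub> i n"
        unfolding E_def using ring_hom_one[OF eh, of n] by (simp add: rps_def)
    qed
  qed
  have Econt: "\<exists>l. E ` ?LI l \<subseteq> rps_ideals ?L ?LI k" for k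
  proof -
    have "\<forall>n. \<exists>l. e n ` I n l \<subseteq> rps_ideals (B n) (I n) k" using econt by blast
    then obtain l where l: "\<And>n. e n ` I n (l n) \<subseteq> rps_ideals (B n) (I n) k"
      using choice[of "\<lambda>n l. e n ` I n l \<subseteq> rps_ideals (B n) (I n) k"] by blast
    define M where "M = max k (Max (l ` {..k}))"
    have "E x \<in> rps_ideals ?L ?LI k" if xM: "x \<in> ?LI M" for x
    proof -
      have xL: "x \<in> carrier ?L" using xM unfolding inv_lim_ideals_def by blast
      have "E x i \<in> ?LI k" for i
      proof -
        have "E x i n \<in> I n k" if "n \<le> k" for n
        proof -
          have "l n \<le> M" "n \<le> M" using that unfolding M_def by (auto intro: le_trans[OF _ max.cobounded2])
          then have "x n \<in> I n (l n)" using xM Idec unfolding inv_lim_ideals_def by blast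
          then have "e n (x n) \<in> rps_ideals (B n) (I n) k" using l by blast
          then show ?thesis unfolding E_def rps_ideals_def by blast
        qed
        then show ?thesis unfolding inv_lim_ideals_def using EL[OF xL] by blast
      qed
      then show ?thesis unfolding rps_ideals_def using Erps[OF xL] by blast
    qed
    then show ?thesis by blast
  qed
  have Eexp: "restricted_exp ?L ?LI E"
    unfolding restricted_exp_def cont_hom_def
  proof (intro conjI ballI allI Ehom Econt)
    fix c assume cL: "c \<in> carrier ?L"
    then have cB: "c n \<in> carrier (B n)" for n unfolding carL by auto
    show "E c 0 = c" unfolding E_def using e0[OF cB] by simp
    fix i j
    show "E (E c i) j = [((i + j) choose i)] \<cdot>\<^bsub>?L\<^esub> E c (i + j)"
      by (rule ext) (simp add: addpowL E_def eexp[OF cB])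
  qed
  show ?thesis
  proof (intro exI[of _ E] conjI allI ballI impI Eexp)
    fix n x show "e n (x n) = (\<lambda>i. E x i n)" unfolding E_def by simp
  next
    fix E' x assume h: "restricted_exp ?L ?LI E' \<and> (\<forall>n. \<forall>x\<in>carrier ?L. e n (x n) = (\<lambda>i. E' x i n))"
      and "x \<in> carrier ?L"
    then show "E' x = E x" unfolding E_def by (metis ext)
  qed
qed

end
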